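(* Let $T>0$, $0<\eta<T$, $\alpha>0$ and $\beta\geq 0$ be constants with $\beta \neq \frac{2T-\alpha \eta ^{2}}{\alpha \eta ^{2}-2\eta+2T}$, and set $D=(\alpha \eta ^{2}-2T)-\beta (2\eta -\alpha \eta ^{2}-2T)$. Then for every $y\in C([0,T],\mathbb{R})$, the boundary value problem \[ u''(t)+y(t)=0,\ t\in(0,T),\qquad u(0)=\beta u(\eta),\quad u(T)=\alpha\int_0^\eta u(s)\,ds \] has a unique solution, given by \begin{align*} u(t)&=\frac{\beta (2T-\alpha \eta ^{2})-2\beta (1-\alpha \eta)t}{D}\int_{0}^{\eta }(\eta -s)y(s)\,ds +\frac{\alpha \beta\eta -\alpha (\beta -1)t}{D}\int_{0}^{\eta }(\eta -s)^{2}y(s)\,ds \\ &\quad+\frac{2(\beta-1)t-2\beta \eta }{D}\int_{0}^{T}(T-s)y(s)\,ds- \int_{0}^{t}(t-s)y(s)\,ds. \end{align*}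
   Context: Standing assumptions of the paper: $T>0$, $\eta\in(0,T)$, $\alpha>0$, $\beta\geq0$. A solution is a function $u\in C^2([0,T])$ satisfying the differential equation on $(0,T)$ and the two boundary conditions. *)

theory Defs
  imports "HOL-Analysis.Analysis"
begin

definition bvp_solution ::
  "real \<Rightarrow> real \<Rightarrow> real \<Rightarrow> real \<Rightarrow> (real \<Rightarrow> real) \<Rightarrow> (real \<Rightarrow> real) \<Rightarrow> bool" where
  "bvp_solution T \<eta> \<alpha> \<beta> y u \<longleftrightarrow>
     (\<exists>u' u''. (\<forall>t\<in>{0..T}. (u has_real_derivative u' t) (at t within {0..T}))
            \<and> (\<forall>t\<in>{0..T}. (u' has_real_derivative u'' t) (at t within {0..T}))
            \<and> continuous_on {0..T} u''
            \<and> (\<forall>t\<in>{0<..<T}. u'' t + y t = 0))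
     \<and> u 0 = \<beta> * u \<eta>
     \<and> u T = \<alpha> * integral {0..\<eta>} u"

end

theory Submission
  imports Defs
begin

lemma intF:
  fixes y :: "real \<Rightarrow> real"
  assumes cy: "continuous_on {0..T} y" and t: "t \<in> {0..T}"
  shows "integral {0..t} (\<lambda>s. (t - s) * y s) = t * integral {0..t} y - integral {0..t} (\<lambda>s. s * y s)"
    and "integral {0..t} (\<lambda>s. (t - s)^2 * y s) = t^2 * integral {0..t} y - 2 * t * integral {0..t} (\<lambda>s. s * y s) + integral {0..t} (\<lambda>s. s^2 * y s)"
proof -
  have c: "continuous_on {0..t} y" using cy t by (auto intro: continuous_on_subset)
  have i0: "y integrable_on {0..t}" using c by (rule integrable_continuous_interval)
  have i1: "(\<lambda>s. s * y s) integrable_on {0..t}"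
    by (rule integrable_continuous_interval) (intro continuous_intros c)
  have i2: "(\<lambda>s. s^2 * y s) integrable_on {0..t}"
    by (rule integrable_continuous_interval) (intro continuous_intros c)
  have i0': "(\<lambda>s. t * y s) integrable_on {0..t}" and i1': "(\<lambda>s. 2 * t * (s * y s)) integrable_on {0..t}"
    and i0'': "(\<lambda>s. t^2 * y s) integrable_on {0..t}"
    by (rule integrable_continuous_interval, intro continuous_intros c)+
  have "integral {0..t} (\<lambda>s. (t - s) * y s) = integral {0..t} (\<lambda>s. t * y s - s * y s)"
    by (simp add: algebra_simps)
  also have "\<dots> = t * integral {0..t} y - integral {0..t} (\<lambda>s. s * y s)"
    using i0' i1 by (simp add: integral_diff)
  finally show "integral {0..t} (\<lambda>s. (t - s) * y s) = t * integral {0..t} y - integral {0..t} (\<lambda>s. s * y s)" .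
  have "integral {0..t} (\<lambda>s. (t - s)^2 * y s) = integral {0..t} (\<lambda>s. t^2 * y s - 2 * t * (s * y s) + s^2 * y s)"
    by (simp add: algebra_simps power2_eq_square)
  also have "\<dots> = t^2 * integral {0..t} y - 2 * t * integral {0..t} (\<lambda>s. s * y s) + integral {0..t} (\<lambda>s. s^2 * y s)"
    using i0'' i1' i2 by (simp add: integral_diff integral_add integrable_diff integrable_add)
  finally show "integral {0..t} (\<lambda>s. (t - s)^2 * y s) = t^2 * integral {0..t} y - 2 * t * integral {0..t} (\<lambda>s. s * y s) + integral {0..t} (\<lambda>s. s^2 * y s)" .
qed

lemma derI:
  fixes y g :: "real \<Rightarrow> real"
  assumes "continuous_on {0..T} g" "t \<in> {0..T}"
  shows "((\<lambda>t. integral {0..t} g) has_real_derivative g t) (at t within {0..T})"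
  using integral_has_vector_derivative[OF assms] by (simp add: has_real_derivative_iff_has_vector_derivative)

lemma affine:
  fixes w w' w'' :: "real \<Rightarrow> real"
  assumes T: "T > 0"
    and d1: "\<forall>t\<in>{0..T}. (w has_real_derivative w' t) (at t within {0..T})"
    and d2: "\<forall>t\<in>{0..T}. (w' has_real_derivative w'' t) (at t within {0..T})"
    and z: "\<forall>t\<in>{0<..<T}. w'' t = 0"
  shows "\<forall>t\<in>{0..T}. w t = w 0 + w' 0 * t"
proof -
  have cw': "continuous_on {0..T} w'"
    unfolding continuous_on_eq_continuous_within using d2 DERIV_continuous by blast
  have cw: "continuous_on {0..T} w"
    unfolding continuous_on_eq_continuous_within using d1 DERIV_continuous by blast
  have c: "w' t = w' 0" if "t \<in> {0..T}" for t
  proof (rule DERIV_isconst2[OF T cw'])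
    fix x
    assume x: "0 < x" "x < T"
    have "(w' has_real_derivative w'' x) (at x within {0..T})" using d2 x by auto
    then have "DERIV w' x :> w'' x" using at_within_Icc_at[of 0 x T] x by simp
    then show "DERIV w' x :> 0" using z x by auto
  qed (use that in auto)
  have g: "w t - w' 0 * t = w 0 - w' 0 * 0" if "t \<in> {0..T}" for t
  proof (rule DERIV_isconst2[OF T, where f="\<lambda>t. w t - w' 0 * t"])
    show "continuous_on {0..T} (\<lambda>t. w t - w' 0 * t)" by (intro continuous_intros cw)
    fix x assume x: "0 < x" "x < T"
    have "(w has_real_derivative w' x) (at x within {0..T})" using d1 x by auto
    then have "DERIV w x :> w' x" using at_within_Icc_at[of 0 x T] x by simp
    then have "DERIV (\<lambda>t. w t - w' 0 * t) x :> w' x - w' 0"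
      by (auto intro!: derivative_eq_intros)
    then show "DERIV (\<lambda>t. w t - w' 0 * t) x :> 0" using c[of x] x by simp
  qed (use that in auto)
  show ?thesis
  proof
    fix t assume t: "t \<in> {0..T}"
    have "w t - w' 0 * t = w 0" using g[OF t] by simp
    then show "w t = w 0 + w' 0 * t" by linarith
  qed
qed

lemma ftc_sub:
  fixes f f' :: "real \<Rightarrow> real"
  assumes d: "\<forall>t\<in>{0..T}. (f has_real_derivative f' t) (at t within {0..T})"
    and e: "0 \<le> e" "e \<le> T"
  shows "(f' has_integral (f e - f 0)) {0..e}"
proof (rule fundamental_theorem_of_calculus[OF e(1)])
  fix x assume x: "x \<in> {0..e}"
  then have "(f has_real_derivative f' x) (at x within {0..T})" using d e by auto
  then have "(f has_real_derivative f' x) (at x within {0..e})" by (rule DERIV_subset) (use e in auto)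
  then show "(f has_vector_derivative f' x) (at x within {0..e})"
    by (simp add: has_real_derivative_iff_has_vector_derivative)
qed

lemma exist_parts:
  fixes y :: "real \<Rightarrow> real" and A B T :: real
  assumes cy: "continuous_on {0..T} y"
  defines "F \<equiv> \<lambda>t. integral {0..t} (\<lambda>s. (t - s) * y s)"
  shows "\<forall>t\<in>{0..T}. ((\<lambda>t. A + B*t - F t) has_real_derivative (B - integral {0..t} y)) (at t within {0..T})"
   and "\<forall>t\<in>{0..T}. ((\<lambda>t. B - integral {0..t} y) has_real_derivative (- y t)) (at t within {0..T})"
   and "0 \<le> e \<Longrightarrow> e \<le> T \<Longrightarrow> integral {0..e} (\<lambda>t. A + B*t - F t) = A*e + B*e^2/2 - integral {0..e} (\<lambda>s. (e-s)^2*y s)/2"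
proof -
  define Y0 where "Y0 = (\<lambda>t. integral {0..t} y)"
  define Y1 where "Y1 = (\<lambda>t. integral {0..t} (\<lambda>s. s * y s))"
  define Y2 where "Y2 = (\<lambda>t. integral {0..t} (\<lambda>s. s^2 * y s))"
  have c1: "continuous_on {0..T} (\<lambda>s. s * y s)" by (intro continuous_intros cy)
  have c2: "continuous_on {0..T} (\<lambda>s. s^2 * y s)" by (intro continuous_intros cy)
  have d0: "(Y0 has_real_derivative y t) (at t within {0..T})" if "t \<in> {0..T}" for t
    unfolding Y0_def by (rule derI[OF cy that])
  have d1: "(Y1 has_real_derivative t * y t) (at t within {0..T})" if "t \<in> {0..T}" for t
    unfolding Y1_def by (rule derI[OF c1 that])
  have d2: "(Y2 has_real_derivative t^2 * y t) (at t within {0..T})" if "t \<in> {0..T}" for t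
    unfolding Y2_def by (rule derI[OF c2 that])
  have Feq: "F t = t * Y0 t - Y1 t" if "t \<in> {0..T}" for t
    unfolding F_def Y0_def Y1_def using intF(1)[OF cy that] .
  have dU: "((\<lambda>t. A + B*t - (t * Y0 t - Y1 t)) has_real_derivative (B - Y0 t)) (at t within {0..T})"
    if t: "t \<in> {0..T}" for t
  proof -
    show ?thesis
      by (rule derivative_eq_intros d0[OF t] d1[OF t] refl | simp)+
  qed
  show D1: "\<forall>t\<in>{0..T}. ((\<lambda>t. A + B*t - F t) has_real_derivative (B - integral {0..t} y)) (at t within {0..T})"
  proof
    fix t assume t: "t \<in> {0..T}"
    show "((\<lambda>t. A + B*t - F t) has_real_derivative (B - integral {0..t} y)) (at t within {0..T})"
      using has_field_derivative_transform_within[OF dU[OF t] zero_less_one t, of "\<lambda>t. A + B*t - F t"]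
      by (simp add: Feq Y0_def)
  qed
  show "\<forall>t\<in>{0..T}. ((\<lambda>t. B - integral {0..t} y) has_real_derivative (- y t)) (at t within {0..T})"
  proof
    fix t assume t: "t \<in> {0..T}"
    have "((\<lambda>t. B - Y0 t) has_real_derivative (0 - y t)) (at t within {0..T})"
      by (intro DERIV_diff DERIV_const d0 t)
    then show "((\<lambda>t. B - integral {0..t} y) has_real_derivative (- y t)) (at t within {0..T})"
      by (simp add: Y0_def)
  qed
  assume e: "0 \<le> e" "e \<le> T"
  define U where "U = (\<lambda>t. A*t + B*t^2/2 - (t^2 * Y0 t - 2*t*Y1 t + Y2 t)/2)"
  have dV: "\<forall>t\<in>{0..T}. (U has_real_derivative (A + B*t - F t)) (at t within {0..T})"
  proof
    fix t assume t: "t \<in> {0..T}"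
    show "(U has_real_derivative (A + B*t - F t)) (at t within {0..T})"
      unfolding U_def Feq[OF t]
      by (rule derivative_eq_intros d0[OF t] d1[OF t] d2[OF t] refl | simp add: power2_eq_square algebra_simps | simp add: field_simps)+
  qed
  have "((\<lambda>t. A + B*t - F t) has_integral (U e - U 0)) {0..e}"
    by (rule ftc_sub[OF dV e])
  then have "integral {0..e} (\<lambda>t. A + B*t - F t) = U e - U 0" by (rule integral_unique)
  also have "\<dots> = A*e + B*e^2/2 - integral {0..e} (\<lambda>s. (e-s)^2*y s)/2"
    using intF(2)[OF cy, of e] e by (simp add: U_def Y0_def Y1_def Y2_def)
  finally show "integral {0..e} (\<lambda>t. A + B*t - F t) = A*e + B*e^2/2 - integral {0..e} (\<lambda>s. (e-s)^2*y s)/2" .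
qed

theorem lemma2p1:
  fixes T \<eta> \<alpha> \<beta> :: real and y :: "real \<Rightarrow> real"
  assumes "T > 0" "0 < \<eta>" "\<eta> < T" "\<alpha> > 0" "\<beta> \<ge> 0"
    and "\<beta> \<noteq> (2*T - \<alpha>*\<eta>^2) / (\<alpha>*\<eta>^2 - 2*\<eta> + 2*T)"
    and "continuous_on {0..T} y"
  defines "D \<equiv> (\<alpha>*\<eta>^2 - 2*T) - \<beta>*(2*\<eta> - \<alpha>*\<eta>^2 - 2*T)"
  defines "u \<equiv> (\<lambda>t.
      (\<beta>*(2*T - \<alpha>*\<eta>^2) - 2*\<beta>*(1 - \<alpha>*\<eta>)*t) / D * integral {0..\<eta>} (\<lambda>s. (\<eta> - s) * y s)
    + (\<alpha>*\<beta>*\<eta> - \<alpha>*(\<beta> - 1)*t) / D * integral {0..\<eta>} (\<lambda>s. (\<eta> - s)^2 * y s)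
    + (2*(\<beta> - 1)*t - 2*\<beta>*\<eta>) / D * integral {0..T} (\<lambda>s. (T - s) * y s)
    - integral {0..t} (\<lambda>s. (t - s) * y s))"
  shows "bvp_solution T \<eta> \<alpha> \<beta> y u
    \<and> (\<forall>v. bvp_solution T \<eta> \<alpha> \<beta> y v \<longrightarrow> (\<forall>t\<in>{0..T}. v t = u t))"
proof -
  note T = assms(1) and e0 = assms(2) and eT = assms(3) and cy = assms(7)
  have Dnz: "D \<noteq> 0"
  proof (cases "\<alpha>*\<eta>^2 - 2*\<eta> + 2*T = 0")
    case True
    then have "D = 2*\<eta> - 4*T" unfolding D_def by (simp add: algebra_simps)
    then show ?thesis using eT e0 by simp
  next
    case False
    have "D = (\<alpha>*\<eta>^2 - 2*T) + \<beta>*(\<alpha>*\<eta>^2 - 2*\<eta> + 2*T)" unfolding D_def by (simp add: algebra_simps)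
    moreover have "\<beta>*(\<alpha>*\<eta>^2 - 2*\<eta> + 2*T) \<noteq> 2*T - \<alpha>*\<eta>^2"
      using assms(6) False by (simp add: field_simps)
    ultimately show ?thesis by auto
  qed
  define I1 where "I1 = integral {0..\<eta>} (\<lambda>s. (\<eta> - s) * y s)"
  define I2 where "I2 = integral {0..\<eta>} (\<lambda>s. (\<eta> - s)^2 * y s)"
  define I3 where "I3 = integral {0..T} (\<lambda>s. (T - s) * y s)"
  define F where "F = (\<lambda>t. integral {0..t} (\<lambda>s. (t - s) * y s))"
  define A where "A = (\<beta>*(2*T - \<alpha>*\<eta>^2)*I1 + \<alpha>*\<beta>*\<eta>*I2 - 2*\<beta>*\<eta>*I3) / D"
  define B where "B = (- 2*\<beta>*(1 - \<alpha>*\<eta>)*I1 - \<alpha>*(\<beta> - 1)*I2 + 2*(\<beta> - 1)*I3) / D"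
  have ueq: "u = (\<lambda>t. A + B*t - F t)"
    unfolding u_def A_def B_def F_def I1_def I2_def I3_def fun_eq_iff
    using Dnz by (simp add: field_simps)
  have P1: "\<forall>t\<in>{0..T}. ((\<lambda>t. A + B*t - F t) has_real_derivative (B - integral {0..t} y)) (at t within {0..T})"
    unfolding F_def by (rule exist_parts(1)[OF cy])
  note P2 = exist_parts(2)[OF cy, of B]
  have P3: "integral {0..\<eta>} u = A*\<eta> + B*\<eta>^2/2 - I2/2"
    unfolding ueq F_def I2_def using exist_parts(3)[OF cy, of \<eta> A B] e0 eT by simp
  have u0: "u 0 = A" unfolding ueq F_def by simp
  have ue: "u \<eta> = A + B*\<eta> - I1" unfolding ueq F_def I1_def by simp
  have uT: "u T = A + B*T - I3" unfolding ueq F_def I3_def by simp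
  have AD: "A*D = \<beta>*(2*T - \<alpha>*\<eta>^2)*I1 + \<alpha>*\<beta>*\<eta>*I2 - 2*\<beta>*\<eta>*I3"
    unfolding A_def using Dnz by simp
  have BD: "B*D = - 2*\<beta>*(1 - \<alpha>*\<eta>)*I1 - \<alpha>*(\<beta> - 1)*I2 + 2*(\<beta> - 1)*I3"
    unfolding B_def using Dnz by simp
  have "D*(A - \<beta> * (A + B*\<eta> - I1)) = A*D - \<beta>*(A*D + (B*D)*\<eta> - D*I1)"
    by (simp add: algebra_simps)
  also have "\<dots> = 0" unfolding AD BD by (simp add: D_def algebra_simps power2_eq_square)
  finally have bc1: "A = \<beta> * (A + B*\<eta> - I1)" using Dnz by simp
  have "D*(A + B*T - I3 - \<alpha> * (A*\<eta> + B*\<eta>^2/2 - I2/2)) = A*D + (B*D)*T - D*I3 - \<alpha> * ((A*D)*\<eta> + (B*D)*\<eta>^2/2 - D*I2/2)"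
    by (simp add: algebra_simps)
  also have "\<dots> = 0" unfolding AD BD by (simp add: D_def field_simps power2_eq_square)
  finally have bc2: "A + B*T - I3 = \<alpha> * (A*\<eta> + B*\<eta>^2/2 - I2/2)" using Dnz by simp
  have sol: "bvp_solution T \<eta> \<alpha> \<beta> y u"
    unfolding bvp_solution_def
  proof (intro conjI exI)
    show "\<forall>t\<in>{0..T}. (u has_real_derivative (B - integral {0..t} y)) (at t within {0..T})"
      unfolding ueq using P1 .
    show "\<forall>t\<in>{0..T}. ((\<lambda>t. B - integral {0..t} y) has_real_derivative (\<lambda>t. - y t) t) (at t within {0..T})"
      using P2 by simp
    show "continuous_on {0..T} (\<lambda>t. - y t)" by (intro continuous_intros cy)
    show "\<forall>t\<in>{0<..<T}. - y t + y t = 0" by simp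
    show "u 0 = \<beta> * u \<eta>" using u0 ue bc1 by simp
    show "u T = \<alpha> * integral {0..\<eta>} u" using uT P3 bc2 by simp
  qed
  have uniq: "\<forall>t\<in>{0..T}. v t = u t" if vs: "bvp_solution T \<eta> \<alpha> \<beta> y v" for v
  proof -
    obtain v' v'' where dv: "\<forall>t\<in>{0..T}. (v has_real_derivative v' t) (at t within {0..T})"
      and dv': "\<forall>t\<in>{0..T}. (v' has_real_derivative v'' t) (at t within {0..T})"
      and eqv: "\<forall>t\<in>{0<..<T}. v'' t + y t = 0"
      and bv1: "v 0 = \<beta> * v \<eta>" and bv2: "v T = \<alpha> * integral {0..\<eta>} v"
      using vs unfolding bvp_solution_def by blast
    define w where "w = (\<lambda>t. v t - u t)"
    define w' where "w' = (\<lambda>t. v' t - (B - integral {0..t} y))"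
    have dw: "\<forall>t\<in>{0..T}. (w has_real_derivative w' t) (at t within {0..T})"
    proof
      fix t assume t: "t \<in> {0..T}"
      show "(w has_real_derivative w' t) (at t within {0..T})"
      proof -
        have du: "(u has_real_derivative (B - integral {0..t} y)) (at t within {0..T})" using P1 t ueq by simp
        have dvt: "(v has_real_derivative v' t) (at t within {0..T})" using dv t by simp
        show ?thesis unfolding w_def w'_def using DERIV_diff[OF dvt du] .
      qed
    qed
    have dw': "\<forall>t\<in>{0..T}. (w' has_real_derivative (v'' t + y t)) (at t within {0..T})"
    proof
      fix t assume t: "t \<in> {0..T}"
      have "(w' has_real_derivative (v'' t - - y t)) (at t within {0..T})"
      proof -
        have du: "((\<lambda>t. B - integral {0..t} y) has_real_derivative (- y t)) (at t within {0..T})" using P2 t by simp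
        have dvt: "(v' has_real_derivative v'' t) (at t within {0..T})" using dv' t by simp
        show ?thesis unfolding w'_def using DERIV_diff[OF dvt du] .
      qed
      then show "(w' has_real_derivative (v'' t + y t)) (at t within {0..T})" by simp
    qed
    have aff: "\<forall>t\<in>{0..T}. w t = w 0 + w' 0 * t"
      by (rule affine[OF T dw dw']) (use eqv in auto)
    define a where "a = w 0"
    define c where "c = w' 0"
    have cu: "continuous_on {0..T} u"
      unfolding continuous_on_eq_continuous_within using sol[unfolded bvp_solution_def] DERIV_continuous by blast
    have iu: "(u has_integral integral {0..\<eta>} u) {0..\<eta>}"
      using cu e0 eT by (intro integrable_integral integrable_continuous_interval) (auto intro: continuous_on_subset)
    have daff: "\<forall>t\<in>{0..T}. ((\<lambda>t. a*t + c*t^2/2) has_real_derivative (a + c*t)) (at t within {0..T})"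
      by (auto intro!: derivative_eq_intros)
    have iw: "((\<lambda>t. a + c*t) has_integral (a*\<eta> + c*\<eta>^2/2)) {0..\<eta>}"
      using ftc_sub[OF daff, of \<eta>] e0 eT by simp
    have hi: "((\<lambda>t. (a + c*t) + u t) has_integral (a*\<eta> + c*\<eta>^2/2 + integral {0..\<eta>} u)) {0..\<eta>}"
      by (rule has_integral_add[OF iw iu])
    have affv: "v t = (a + c*t) + u t" if t: "t \<in> {0..T}" for t
    proof -
      have "w t = w 0 + w' 0 * t" using aff t by blast
      then show ?thesis unfolding a_def c_def w_def by linarith
    qed
    have E1: "a - \<beta>*(a + c*\<eta>) = 0"
    proof -
      have "v 0 = a + u 0" using affv[of 0] T by simp
      moreover have "v \<eta> = a + c*\<eta> + u \<eta>" using affv[of \<eta>] e0 eT by simp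
      moreover have "u 0 = \<beta> * u \<eta>" using u0 ue bc1 by simp
      ultimately show ?thesis using bv1 by (simp add: algebra_simps)
    qed
    have heq: "(a + c*t) + u t = v t" if t: "t \<in> {0..\<eta>}" for t
      using affv[of t] t eT by simp
    have "(v has_integral (a*\<eta> + c*\<eta>^2/2 + integral {0..\<eta>} u)) {0..\<eta>}"
      by (rule has_integral_eq[OF heq hi])
    then have iv: "integral {0..\<eta>} v = a*\<eta> + c*\<eta>^2/2 + integral {0..\<eta>} u"
      by (rule integral_unique)
    have vT: "v T = a + c*T + u T" using affv[of T] T by simp
    have E2: "a + c*T - \<alpha>*(a*\<eta> + c*\<eta>^2/2) = 0"
      using vT bv2 iv uT P3 bc2 by (simp add: algebra_simps)
    have "a * D = -(2*T - \<alpha>*\<eta>^2) * (a - \<beta>*(a + c*\<eta>)) - 2*\<beta>*\<eta>*(a + c*T - \<alpha>*(a*\<eta> + c*\<eta>^2/2))"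
      unfolding D_def by (simp add: field_simps power2_eq_square)
    then have a0: "a = 0" using E1 E2 Dnz by simp
    have "c * D = 2*(1 - \<alpha>*\<eta>) * (a - \<beta>*(a + c*\<eta>)) - 2*(1 - \<beta>)*(a + c*T - \<alpha>*(a*\<eta> + c*\<eta>^2/2))"
      unfolding D_def by (simp add: field_simps power2_eq_square)
    then have c0: "c = 0" using E1 E2 Dnz by simp
    show ?thesis using affv a0 c0 by simp
  qed
  show ?thesis using sol uniq by blast
qed

end
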